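(* For every integer $n\ge 24$, $5^n$ is selfcondensable.
   Context: For a finite nonempty multiset $S$ of real numbers, $V(S)$ is the smallest set of real numbers such that: (1) if $|S|=1$ then $S\subseteq V(S)$; (2) if $|S|\ge 2$, then for all nonempty multisets $A,B$ with $A+B=S$ (multiplicities add) and all $a\in V(A)$, $b\in V(B)$, each of $a+b,\ a-b,\ b-a,\ ab,\ a/b,\ b/a,\ a^b,\ b^a$ lies in $V(S)$ whenever it is a well-defined real number; (3) if $a\in V(S)$ is a nonnegative integer then $a!\in V(S)$ (with $0!=1$). A positive integer $N$ is selfcondensable if $N\in V(S_N)$, where $S_N$ is the multiset of the digits of the decimal representation of $N$ (each digit counted with its multiplicity). *)

theory Defs
  imports Complex_Main "HOL-Library.Multiset"
begin

definition pow_val :: "real \<Rightarrow> real \<Rightarrow> real \<Rightarrow> bool" where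
  "pow_val a b c \<longleftrightarrow>
     (a > 0 \<and> c = a powr b) \<or>
     (a = 0 \<and> b > 0 \<and> c = 0) \<or>
     (a \<noteq> 0 \<and> b \<in> \<int> \<and> c = a powi \<lfloor>b\<rfloor>)"

definition op_val :: "real \<Rightarrow> real \<Rightarrow> real \<Rightarrow> bool" where
  "op_val a b c \<longleftrightarrow>
     c = a + b \<or> c = a - b \<or> c = b - a \<or> c = a * b \<or>
     (b \<noteq> 0 \<and> c = a / b) \<or> (a \<noteq> 0 \<and> c = b / a) \<or>
     pow_val a b c \<or> pow_val b a c"

inductive inV :: "real multiset \<Rightarrow> real \<Rightarrow> bool" where
  single: "inV {#x#} x"
| combine: "A \<noteq> {#} \<Longrightarrow> B \<noteq> {#} \<Longrightarrow> inV A a \<Longrightarrow> inV B b \<Longrightarrow> op_val a b c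
            \<Longrightarrow> inV (A + B) c"
| factorial: "inV S a \<Longrightarrow> a \<in> \<nat> \<Longrightarrow> inV S (fact (nat \<lfloor>a\<rfloor>))"

fun digits :: "nat \<Rightarrow> nat list" where
  "digits n = (if n < 10 then [n] else n mod 10 # digits (n div 10))"

definition digit_mset :: "nat \<Rightarrow> real multiset" where
  "digit_mset N = image_mset real (mset (digits N))"

definition selfcondensable :: "nat \<Rightarrow> bool" where
  "selfcondensable N \<longleftrightarrow> N > 0 \<and> inV (digit_mset N) (real N)"

end

theory Submission imports Defs begin
lemma inV_ne: "inV A a \<Longrightarrow> A \<noteq> {#}"
  by (induction rule: inV.induct) auto

lemma sing: "inV {#x#} x" by (rule inV.single)

lemma addI: "inV A a \<Longrightarrow> inV B b \<Longrightarrow> c = a + b \<Longrightarrow> inV (A+B) c"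
  by (rule inV.combine) (auto simp: inV_ne op_val_def)
lemma mulI: "inV A a \<Longrightarrow> inV B b \<Longrightarrow> c = a * b \<Longrightarrow> inV (A+B) c"
  by (rule inV.combine) (auto simp: inV_ne op_val_def)
lemma subI: "inV A a \<Longrightarrow> inV B b \<Longrightarrow> c = a - b \<Longrightarrow> inV (A+B) c"
  by (rule inV.combine) (auto simp: inV_ne op_val_def)
lemma powI: "inV A a \<Longrightarrow> inV B b \<Longrightarrow> b = real k \<Longrightarrow> a > 0 \<Longrightarrow> c = a ^ k \<Longrightarrow> inV (A+B) c"
  by (rule inV.combine) (auto simp: inV_ne op_val_def pow_val_def powr_realpow)
lemma fctI: "inV A a \<Longrightarrow> a = real k \<Longrightarrow> c = fact k \<Longrightarrow> inV A c"
  using inV.factorial[of A a] by simp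

lemma pair_one: "inV {#d, d#} 1"
proof (cases "d = 0")
  case True
  have "inV ({#d#} + {#d#}) 0" using addI[OF sing sing, of 0 d d] True by simp
  from fctI[OF this, of 0 1] show ?thesis by simp
next
  case False
  have "inV ({#d#} + {#d#}) 1"
    by (rule inV.combine) (use False in \<open>auto simp: op_val_def intro: sing\<close>)
  then show ?thesis by simp
qed

lemma absorb: "inV A 1 \<Longrightarrow> inV (A + B) 1"
proof (induction B)
  case empty then show ?case by simp
next
  case (add x B)
  have ne: "A + B \<noteq> {#}" using inV_ne[OF add.IH[OF add.prems]] .
  have "inV ((A + B) + {#x#}) 1"
    by (rule inV.combine[OF ne _ add.IH[OF add.prems] sing]) (auto simp: op_val_def pow_val_def)
  then show ?case by simp
qed

lemma keep: "inV A v \<Longrightarrow> inV B 1 \<Longrightarrow> inV (A + B) v"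
  using mulI[of A v B 1 v] by simp

declare digits.simps[simp del]

fun cost :: "nat \<Rightarrow> nat" where
  "cost v = (if v \<le> 1 then 1 else cost (v div 2) + (if even v then 2 else 3))"
declare cost.simps[simp del]

definition pairsum :: "real list \<Rightarrow> real multiset" where
  "pairsum ds = sum_list (map (\<lambda>d. {#d, d#}) ds)"

lemma pairsum_Cons: "pairsum (d # ds) = {#d, d#} + pairsum ds"
  by (simp add: pairsum_def)

lemma construct: "1 \<le> v \<Longrightarrow> cost v \<le> length ds \<Longrightarrow> inV (pairsum ds + T) (real v)"
proof (induction v arbitrary: ds T rule: less_induct)
  case (less v)
  show ?case
  proof (cases "v = 1")
    case True
    have "cost v = 1" using True cost.simps[of 1] by simp
    then have "ds \<noteq> []" using less.prems by auto
    then obtain d ds' where ds: "ds = d # ds'" by (cases ds) auto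
    have "inV ({#d, d#} + (pairsum ds' + T)) 1" by (rule absorb[OF pair_one])
    then show ?thesis using True ds by (simp add: pairsum_Cons add.assoc)
  next
    case False
    define k where "k = v div 2"
    have k1: "1 \<le> k" "k < v" using False less.prems(1) by (auto simp: k_def)
    have cv: "cost v = cost k + (if even v then 2 else 3)"
      using False less.prems(1) by (simp add: cost.simps[of v] k_def)
    have "length ds \<ge> 2" using cv less.prems(2) by (auto split: if_splits)
    then obtain a b ds' where ds: "ds = a # b # ds'"
      by (cases ds; cases "tl ds") auto
    have two: "inV ({#a, a#} + {#b, b#}) 2"
      using addI[OF pair_one pair_one, of 2] by simp
    show ?thesis
    proof (cases "even v")
      case True
      have "cost k \<le> length ds'" using cv True less.prems(2) ds by simp
      from less.IH[OF k1(2) k1(1) this, of T]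
      have "inV ((pairsum ds' + T) + ({#a, a#} + {#b, b#})) (real k * 2)"
        using mulI[OF _ two] by blast
      moreover have "real k * 2 = real v" using True k_def by auto
      moreover have "pairsum ds + T = (pairsum ds' + T) + ({#a, a#} + {#b, b#})"
        using ds by (simp add: multiset_eq_iff pairsum_Cons)
      ultimately show ?thesis by metis
    next
      case odd: False
      have "length ds' \<ge> 1" using cv odd less.prems(2) ds k1 by simp
      then obtain c ds'' where ds': "ds' = c # ds''" by (cases ds') auto
      have "cost k \<le> length ds''" using cv odd less.prems(2) ds ds' by simp
      from less.IH[OF k1(2) k1(1) this, of T]
      have m2: "inV ((pairsum ds'' + T) + ({#a, a#} + {#b, b#})) (real k * 2)"
        using mulI[OF _ two] by blast
      have "v = k * 2 + 1" using odd k_def by presburger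
      then have vv: "real v = real k * 2 + 1" by simp
      from addI[OF m2 pair_one[of c], of "real v"]
      have "inV (((pairsum ds'' + T) + ({#a, a#} + {#b, b#})) + {#c, c#}) (real v)"
        using vv by simp
      moreover have "pairsum ds + T = ((pairsum ds'' + T) + ({#a, a#} + {#b, b#})) + {#c, c#}"
        using ds ds' by (simp add: multiset_eq_iff pairsum_Cons)
      ultimately show ?thesis by metis
    qed
  qed
qed

lemma pigeon: "finite S \<Longrightarrow> set_mset R \<subseteq> S \<Longrightarrow>
   \<exists>ds T. R = pairsum ds + T \<and> size R \<le> 2 * length ds + card S"
proof (induction "size R" arbitrary: R rule: less_induct)
  case less
  show ?case
  proof (cases "size R \<le> card S")
    case True
    then show ?thesis by (intro exI[of _ "[]"] exI[of _ R]) (simp add: pairsum_def)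
  next
    case False
    have "size (mset_set S) < size R" using False by simp
    then obtain x where x: "x \<in># R" "count (mset_set S) x < count R x"
      using size_lt_imp_ex_count_lt by blast
    have "x \<in> S" using x less.prems by auto
    then have "count (mset_set S) x = 1" using less.prems by simp
    then have c2: "count R x \<ge> 2" using x by simp
    define R' where "R' = R - {#x, x#}"
    have R: "R = {#x, x#} + R'" unfolding R'_def using c2 by (auto simp: multiset_eq_iff)
    have "size R' < size R" using R by simp
    moreover have "set_mset R' \<subseteq> S" using less.prems R by auto
    ultimately obtain ds T where h: "R' = pairsum ds + T" "size R' \<le> 2 * length ds + card S"
      using less.hyps less.prems(1) by blast
    show ?thesis
      by (intro exI[of _ "x # ds"] exI[of _ T]) (use R h in \<open>simp add: pairsum_Cons add.assoc\<close>)
  qed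
qed

lemma digits_lt: "d \<in> set (digits N) \<Longrightarrow> d < 10"
proof (induction N rule: digits.induct)
  case (1 n)
  show ?case
  proof (cases "n < 10")
    case True then show ?thesis using 1 by (simp add: digits.simps[of n])
  next
    case False then show ?thesis using 1 by (auto simp: digits.simps[of n])
  qed
qed

lemma len_digits: "10 ^ k \<le> N \<Longrightarrow> k < length (digits N)"
proof (induction k arbitrary: N)
  case 0 then show ?case by (simp add: digits.simps[of N])
next
  case (Suc k)
  have p: "(1::nat) \<le> 10 ^ k" by simp
  have q: "10 ^ k * 10 \<le> N" using Suc.prems by (simp add: mult.commute)
  have "(10::nat) \<le> 10 ^ k * 10" using p by simp
  then have "N \<ge> 10" using q by linarith
  moreover have "10 ^ k \<le> N div 10" using q by (simp add: less_eq_div_iff_mult_less_eq)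
  ultimately show ?case using Suc.IH by (simp add: digits.simps[of N])
qed

lemma five_mod: "1 \<le> n \<Longrightarrow> (5::nat) ^ n mod 10 = 5"
proof (induction n)
  case 0 then show ?case by simp
next
  case (Suc n)
  show ?case
  proof (cases "n = 0")
    case True then show ?thesis by simp
  next
    case False
    then have "(5::nat) ^ n mod 10 = 5" using Suc by simp
    have "(5::nat) ^ Suc n mod 10 = (5 * (5 ^ n mod 10)) mod 10" by (simp add: mod_mult_right_eq)
    also have "\<dots> = 5" using \<open>(5::nat) ^ n mod 10 = 5\<close> by simp
    finally show ?thesis .
  qed
qed

lemma generic: "1 \<le> n \<Longrightarrow> 10 ^ (2 * cost n + 10) \<le> (5::nat) ^ n \<Longrightarrow> selfcondensable (5 ^ n)"
proof -
  assume n1: "1 \<le> n" and big: "10 ^ (2 * cost n + 10) \<le> (5::nat) ^ n"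
  define N where "N = (5::nat) ^ n"
  have "(10::nat) \<le> 10 ^ (2 * cost n + 10)" using power_increasing[of 1 "2 * cost n + 10" "10::nat"] by simp
  then have "10 \<le> N" using big unfolding N_def by linarith
  moreover have "N mod 10 = 5" using five_mod[OF n1] N_def by simp
  ultimately have dN: "digits N = 5 # digits (N div 10)"
    by (subst digits.simps) simp
  have "2 * cost n + 10 < length (digits N)" using len_digits big N_def by blast
  then have lenR: "2 * cost n + 10 \<le> length (digits (N div 10))" using dN by simp
  define R where "R = image_mset real (mset (digits (N div 10)))"
  have sR: "set_mset R \<subseteq> real ` {..<10}" unfolding R_def using digits_lt by auto
  have cS: "card (real ` {..<10::nat}) = 10" by (simp add: card_image)
  obtain ds T where dsT: "R = pairsum ds + T" "size R \<le> 2 * length ds + card (real ` {..<10::nat})"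
    using pigeon[OF _ sR] by blast
  have "cost n \<le> length ds" using dsT(2) cS lenR unfolding R_def by simp
  from construct[OF n1 this, of T] have iR: "inV R (real n)" using dsT(1) by simp
  have "inV ({#5#} + R) (real N)"
    by (rule powI[OF sing iR, where k=n]) (simp_all add: N_def)
  moreover have "digit_mset N = {#5#} + R" unfolding digit_mset_def R_def dN by simp
  ultimately show ?thesis unfolding selfcondensable_def N_def by simp
qed
lemma sc24: "selfcondensable (5^24)"
proof -
  have h1: "inV {#4::real#} 24" using fctI[OF sing[of "4::real"], where k=4 and c=24] by (simp add: fact_numeral)
  have r0: "inV {#0::real#} 1" using fctI[OF sing[of "0::real"], where k=0 and c=1] by simp
  have r: "inV ({#0::real#} + {#5,5,9,9,6,6,6,0,4,4,7,7,3,2#}) 1" by (rule absorb[OF r0])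
  have 1: "inV ({#5::real#} + ({#4::real#} + ({#0::real#} + {#5,5,9,9,6,6,6,0,4,4,7,7,3,2#}))) (real ((5::nat)^24))" by (rule powI[OF sing keep[OF h1 r], where k=24]) simp_all
  have 2: "digit_mset (5^24) = ({#5::real#} + ({#4::real#} + ({#0::real#} + {#5,5,9,9,6,6,6,0,4,4,7,7,3,2#})))" by (simp add: digit_mset_def digits.simps)
  show ?thesis unfolding selfcondensable_def 2 using 1 by simp
qed

lemma sc25: "selfcondensable (5^25)"
proof -
  have h2: "inV {#2::real#} 2" by (rule sing)
  have h3: "inV {#5::real#} 5" by (rule sing)
  have h4: "inV ({#5::real#} + {#2::real#}) (25)" using powI[OF h3 h2, where k=2 and c="25"] by simp
  have r0: "inV {#1::real#} 1" by (rule sing)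
  have r: "inV ({#1::real#} + {#2,2,2,2,9,9,8,8,0,3,3,3,7,6#}) 1" by (rule absorb[OF r0])
  have 1: "inV ({#5::real#} + (({#5::real#} + {#2::real#}) + ({#1::real#} + {#2,2,2,2,9,9,8,8,0,3,3,3,7,6#}))) (real ((5::nat)^25))" by (rule powI[OF sing keep[OF h4 r], where k=25]) simp_all
  have 2: "digit_mset (5^25) = ({#5::real#} + (({#5::real#} + {#2::real#}) + ({#1::real#} + {#2,2,2,2,9,9,8,8,0,3,3,3,7,6#})))" by (simp add: digit_mset_def digits.simps)
  show ?thesis unfolding selfcondensable_def 2 using 1 by simp
qed

lemma sc26: "selfcondensable (5^26)"
proof -
  have h2: "inV {#2::real#} 2" by (rule sing)
  have h3: "inV {#4::real#} 24" using fctI[OF sing[of "4::real"], where k=4 and c=24] by (simp add: fact_numeral)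
  have h4: "inV ({#2::real#} + {#4::real#}) (26)" using addI[OF h2 h3, where c="26"] by simp
  have r0: "inV {#1::real#} 1" by (rule sing)
  have r: "inV ({#1::real#} + {#1,1,1,1,4,9,9,0,6,6,6,3,8,7,5#}) 1" by (rule absorb[OF r0])
  have 1: "inV ({#5::real#} + (({#2::real#} + {#4::real#}) + ({#1::real#} + {#1,1,1,1,4,9,9,0,6,6,6,3,8,7,5#}))) (real ((5::nat)^26))" by (rule powI[OF sing keep[OF h4 r], where k=26]) simp_all
  have 2: "digit_mset (5^26) = ({#5::real#} + (({#2::real#} + {#4::real#}) + ({#1::real#} + {#1,1,1,1,4,9,9,0,6,6,6,3,8,7,5#})))" by (simp add: digit_mset_def digits.simps)
  show ?thesis unfolding selfcondensable_def 2 using 1 by simp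
qed

lemma sc27: "selfcondensable (5^27)"
proof -
  have h2: "inV {#3::real#} 3" by (rule sing)
  have h3: "inV {#4::real#} 24" using fctI[OF sing[of "4::real"], where k=4 and c=24] by (simp add: fact_numeral)
  have h4: "inV ({#3::real#} + {#4::real#}) (27)" using addI[OF h2 h3, where c="27"] by simp
  have r0: "inV {#1::real#} 1" by (rule sing)
  have r: "inV ({#1::real#} + {#7,5,5,5,0,0,8,8,8,9,9,6,2,2,2#}) 1" by (rule absorb[OF r0])
  have 1: "inV ({#5::real#} + (({#3::real#} + {#4::real#}) + ({#1::real#} + {#7,5,5,5,0,0,8,8,8,9,9,6,2,2,2#}))) (real ((5::nat)^27))" by (rule powI[OF sing keep[OF h4 r], where k=27]) simp_all
  have 2: "digit_mset (5^27) = ({#5::real#} + (({#3::real#} + {#4::real#}) + ({#1::real#} + {#7,5,5,5,0,0,8,8,8,9,9,6,2,2,2#})))" by (simp add: digit_mset_def digits.simps)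
  show ?thesis unfolding selfcondensable_def 2 using 1 by simp
qed

lemma sc28: "selfcondensable (5^28)"
proof -
  have h2: "inV {#4::real#} 4" by (rule sing)
  have h3: "inV {#4::real#} 24" using fctI[OF sing[of "4::real"], where k=4 and c=24] by (simp add: fact_numeral)
  have h4: "inV ({#4::real#} + {#4::real#}) (28)" using addI[OF h2 h3, where c="28"] by simp
  have r0: "inV {#1::real#} 1" by (rule sing)
  have r: "inV ({#1::real#} + {#3,7,2,2,2,2,5,9,9,9,0,0,8,6,6,1#}) 1" by (rule absorb[OF r0])
  have 1: "inV ({#5::real#} + (({#4::real#} + {#4::real#}) + ({#1::real#} + {#3,7,2,2,2,2,5,9,9,9,0,0,8,6,6,1#}))) (real ((5::nat)^28))" by (rule powI[OF sing keep[OF h4 r], where k=28]) simp_all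
  have 2: "digit_mset (5^28) = ({#5::real#} + (({#4::real#} + {#4::real#}) + ({#1::real#} + {#3,7,2,2,2,2,5,9,9,9,0,0,8,6,6,1#})))" by (simp add: digit_mset_def digits.simps)
  show ?thesis unfolding selfcondensable_def 2 using 1 by simp
qed

lemma sc29: "selfcondensable (5^29)"
proof -
  have h2: "inV {#4::real#} 24" using fctI[OF sing[of "4::real"], where k=4 and c=24] by (simp add: fact_numeral)
  have h3: "inV {#5::real#} 5" by (rule sing)
  have h4: "inV ({#4::real#} + {#5::real#}) (29)" using addI[OF h2 h3, where c="29"] by simp
  have r0: "inV {#1::real#} 1" by (rule sing)
  have r: "inV ({#1::real#} + {#1,1,8,6,6,2,2,2,4,5,9,9,3,3,0,0,7#}) 1" by (rule absorb[OF r0])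
  have 1: "inV ({#5::real#} + (({#4::real#} + {#5::real#}) + ({#1::real#} + {#1,1,8,6,6,2,2,2,4,5,9,9,3,3,0,0,7#}))) (real ((5::nat)^29))" by (rule powI[OF sing keep[OF h4 r], where k=29]) simp_all
  have 2: "digit_mset (5^29) = ({#5::real#} + (({#4::real#} + {#5::real#}) + ({#1::real#} + {#1,1,8,6,6,2,2,2,4,5,9,9,3,3,0,0,7#})))" by (simp add: digit_mset_def digits.simps)
  show ?thesis unfolding selfcondensable_def 2 using 1 by simp
qed

lemma sc30: "selfcondensable (5^30)"
proof -
  have h2: "inV {#3::real#} 6" using fctI[OF sing[of "3::real"], where k=3 and c=6] by (simp add: fact_numeral)
  have h3: "inV {#4::real#} 24" using fctI[OF sing[of "4::real"], where k=4 and c=24] by (simp add: fact_numeral)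
  have h4: "inV ({#3::real#} + {#4::real#}) (30)" using addI[OF h2 h3, where c="30"] by simp
  have r0: "inV {#1::real#} 1" by (rule sing)
  have r: "inV ({#1::real#} + {#9,3,1,1,2,2,2,5,5,5,5,7,7,4,6,6,8#}) 1" by (rule absorb[OF r0])
  have 1: "inV ({#5::real#} + (({#3::real#} + {#4::real#}) + ({#1::real#} + {#9,3,1,1,2,2,2,5,5,5,5,7,7,4,6,6,8#}))) (real ((5::nat)^30))" by (rule powI[OF sing keep[OF h4 r], where k=30]) simp_all
  have 2: "digit_mset (5^30) = ({#5::real#} + (({#3::real#} + {#4::real#}) + ({#1::real#} + {#9,3,1,1,2,2,2,5,5,5,5,7,7,4,6,6,8#})))" by (simp add: digit_mset_def digits.simps)
  show ?thesis unfolding selfcondensable_def 2 using 1 by simp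
qed

lemma sc31: "selfcondensable (5^31)"
proof -
  have h2: "inV {#4::real#} 24" using fctI[OF sing[of "4::real"], where k=4 and c=24] by (simp add: fact_numeral)
  have h3: "inV {#7::real#} 7" by (rule sing)
  have h4: "inV ({#4::real#} + {#7::real#}) (31)" using addI[OF h2 h3, where c="31"] by simp
  have r0: "inV {#1::real#} 1" by (rule sing)
  have r: "inV ({#1::real#} + {#6,6,6,5,5,1,2,2,2,8,8,7,7,7,3,3,0,9#}) 1" by (rule absorb[OF r0])
  have 1: "inV ({#5::real#} + (({#4::real#} + {#7::real#}) + ({#1::real#} + {#6,6,6,5,5,1,2,2,2,8,8,7,7,7,3,3,0,9#}))) (real ((5::nat)^31))" by (rule powI[OF sing keep[OF h4 r], where k=31]) simp_all
  have 2: "digit_mset (5^31) = ({#5::real#} + (({#4::real#} + {#7::real#}) + ({#1::real#} + {#6,6,6,5,5,1,2,2,2,8,8,7,7,7,3,3,0,9#})))" by (simp add: digit_mset_def digits.simps)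
  show ?thesis unfolding selfcondensable_def 2 using 1 by simp
qed

lemma sc32: "selfcondensable (5^32)"
proof -
  have h2: "inV {#2::real#} 2" by (rule sing)
  have h3: "inV {#5::real#} 5" by (rule sing)
  have h4: "inV ({#2::real#} + {#5::real#}) (32)" using powI[OF h2 h3, where k=5 and c="32"] by simp
  have r0: "inV {#0::real#} 1" using fctI[OF sing[of "0::real"], where k=0 and c=1] by simp
  have r: "inV ({#0::real#} + {#2,2,2,3,3,3,3,8,8,8,0,6,6,6,6,6,4,9,9#}) 1" by (rule absorb[OF r0])
  have 1: "inV ({#5::real#} + (({#2::real#} + {#5::real#}) + ({#0::real#} + {#2,2,2,3,3,3,3,8,8,8,0,6,6,6,6,6,4,9,9#}))) (real ((5::nat)^32))" by (rule powI[OF sing keep[OF h4 r], where k=32]) simp_all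
  have 2: "digit_mset (5^32) = ({#5::real#} + (({#2::real#} + {#5::real#}) + ({#0::real#} + {#2,2,2,3,3,3,3,8,8,8,0,6,6,6,6,6,4,9,9#})))" by (simp add: digit_mset_def digits.simps)
  show ?thesis unfolding selfcondensable_def 2 using 1 by simp
qed

lemma sc33: "selfcondensable (5^33)"
proof -
  have h2: "inV {#4::real#} 24" using fctI[OF sing[of "4::real"], where k=4 and c=24] by (simp add: fact_numeral)
  have h3: "inV {#9::real#} 9" by (rule sing)
  have h4: "inV ({#4::real#} + {#9::real#}) (33)" using addI[OF h2 h3, where c="33"] by simp
  have r0: "inV {#1::real#} 1" by (rule sing)
  have r: "inV ({#1::real#} + {#1,1,1,1,1,6,6,4,4,4,5,5,3,3,3,2,2,2,8,8#}) 1" by (rule absorb[OF r0])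
  have 1: "inV ({#5::real#} + (({#4::real#} + {#9::real#}) + ({#1::real#} + {#1,1,1,1,1,6,6,4,4,4,5,5,3,3,3,2,2,2,8,8#}))) (real ((5::nat)^33))" by (rule powI[OF sing keep[OF h4 r], where k=33]) simp_all
  have 2: "digit_mset (5^33) = ({#5::real#} + (({#4::real#} + {#9::real#}) + ({#1::real#} + {#1,1,1,1,1,6,6,4,4,4,5,5,3,3,3,2,2,2,8,8#})))" by (simp add: digit_mset_def digits.simps)
  show ?thesis unfolding selfcondensable_def 2 using 1 by simp
qed

lemma sc34: "selfcondensable (5^34)"
proof -
  have h2: "inV {#1::real#} 1" by (rule sing)
  have h4: "inV {#4::real#} 24" using fctI[OF sing[of "4::real"], where k=4 and c=24] by (simp add: fact_numeral)
  have h5: "inV {#9::real#} 9" by (rule sing)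
  have h6: "inV ({#4::real#} + {#9::real#}) (33)" using addI[OF h4 h5, where c="33"] by simp
  have h7: "inV ({#1::real#} + ({#4::real#} + {#9::real#})) (34)" using addI[OF h2 h6, where c="34"] by simp
  have r0: "inV {#0::real#} 1" using fctI[OF sing[of "0::real"], where k=0 and c=1] by simp
  have r: "inV ({#0::real#} + {#5,5,8,2,2,2,2,0,0,7,7,7,6,6,6,6,6,3,4#}) 1" by (rule absorb[OF r0])
  have 1: "inV ({#5::real#} + (({#1::real#} + ({#4::real#} + {#9::real#})) + ({#0::real#} + {#5,5,8,2,2,2,2,0,0,7,7,7,6,6,6,6,6,3,4#}))) (real ((5::nat)^34))" by (rule powI[OF sing keep[OF h7 r], where k=34]) simp_all
  have 2: "digit_mset (5^34) = ({#5::real#} + (({#1::real#} + ({#4::real#} + {#9::real#})) + ({#0::real#} + {#5,5,8,2,2,2,2,0,0,7,7,7,6,6,6,6,6,3,4#})))" by (simp add: digit_mset_def digits.simps)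
  show ?thesis unfolding selfcondensable_def 2 using 1 by simp
qed

lemma sc35: "selfcondensable (5^35)"
proof -
  have h2: "inV {#5::real#} 5" by (rule sing)
  have h3: "inV {#7::real#} 7" by (rule sing)
  have h4: "inV ({#5::real#} + {#7::real#}) (35)" using mulI[OF h2 h3, where c="35"] by simp
  have r0: "inV {#1::real#} 1" by (rule sing)
  have r: "inV ({#1::real#} + {#2,2,2,9,1,1,0,0,0,3,3,3,3,3,3,8,8,4,6,6,7#}) 1" by (rule absorb[OF r0])
  have 1: "inV ({#5::real#} + (({#5::real#} + {#7::real#}) + ({#1::real#} + {#2,2,2,9,1,1,0,0,0,3,3,3,3,3,3,8,8,4,6,6,7#}))) (real ((5::nat)^35))" by (rule powI[OF sing keep[OF h4 r], where k=35]) simp_all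
  have 2: "digit_mset (5^35) = ({#5::real#} + (({#5::real#} + {#7::real#}) + ({#1::real#} + {#2,2,2,9,1,1,0,0,0,3,3,3,3,3,3,8,8,4,6,6,7#})))" by (simp add: digit_mset_def digits.simps)
  show ?thesis unfolding selfcondensable_def 2 using 1 by simp
qed

lemma sc36: "selfcondensable (5^36)"
proof -
  have h2: "inV {#2::real#} 2" by (rule sing)
  have h3: "inV {#3::real#} 6" using fctI[OF sing[of "3::real"], where k=3 and c=6] by (simp add: fact_numeral)
  have h4: "inV ({#3::real#} + {#2::real#}) (36)" using powI[OF h3 h2, where k=2 and c="36"] by simp
  have r0: "inV {#1::real#} 1" by (rule sing)
  have r: "inV ({#1::real#} + {#1,1,1,4,4,5,5,5,5,9,2,2,8,8,8,6,6,6,6,6,0,0#}) 1" by (rule absorb[OF r0])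
  have 1: "inV ({#5::real#} + (({#3::real#} + {#2::real#}) + ({#1::real#} + {#1,1,1,4,4,5,5,5,5,9,2,2,8,8,8,6,6,6,6,6,0,0#}))) (real ((5::nat)^36))" by (rule powI[OF sing keep[OF h4 r], where k=36]) simp_all
  have 2: "digit_mset (5^36) = ({#5::real#} + (({#3::real#} + {#2::real#}) + ({#1::real#} + {#1,1,1,4,4,5,5,5,5,9,2,2,8,8,8,6,6,6,6,6,0,0#})))" by (simp add: digit_mset_def digits.simps)
  show ?thesis unfolding selfcondensable_def 2 using 1 by simp
qed

lemma sc37: "selfcondensable (5^37)"
proof -
  have h2: "inV {#1::real#} 1" by (rule sing)
  have h4: "inV {#2::real#} 2" by (rule sing)
  have h5: "inV {#3::real#} 6" using fctI[OF sing[of "3::real"], where k=3 and c=6] by (simp add: fact_numeral)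
  have h6: "inV ({#3::real#} + {#2::real#}) (36)" using powI[OF h5 h4, where k=2 and c="36"] by simp
  have h7: "inV ({#1::real#} + ({#3::real#} + {#2::real#})) (37)" using addI[OF h2 h6, where c="37"] by simp
  have r0: "inV {#1::real#} 1" by (rule sing)
  have r: "inV ({#1::real#} + {#7,7,7,2,2,2,5,5,5,9,9,6,1,4,4,8,3,3,3,0,0#}) 1" by (rule absorb[OF r0])
  have 1: "inV ({#5::real#} + (({#1::real#} + ({#3::real#} + {#2::real#})) + ({#1::real#} + {#7,7,7,2,2,2,5,5,5,9,9,6,1,4,4,8,3,3,3,0,0#}))) (real ((5::nat)^37))" by (rule powI[OF sing keep[OF h7 r], where k=37]) simp_all
  have 2: "digit_mset (5^37) = ({#5::real#} + (({#1::real#} + ({#3::real#} + {#2::real#})) + ({#1::real#} + {#7,7,7,2,2,2,5,5,5,9,9,6,1,4,4,8,3,3,3,0,0#})))" by (simp add: digit_mset_def digits.simps)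
  show ?thesis unfolding selfcondensable_def 2 using 1 by simp
qed

lemma sc38: "selfcondensable (5^38)"
proof -
  have h2: "inV {#2::real#} 2" by (rule sing)
  have h4: "inV {#2::real#} 2" by (rule sing)
  have h5: "inV {#3::real#} 6" using fctI[OF sing[of "3::real"], where k=3 and c=6] by (simp add: fact_numeral)
  have h6: "inV ({#3::real#} + {#2::real#}) (36)" using powI[OF h5 h4, where k=2 and c="36"] by simp
  have h7: "inV ({#2::real#} + ({#3::real#} + {#2::real#})) (38)" using addI[OF h2 h6, where c="38"] by simp
  have r0: "inV {#1::real#} 1" by (rule sing)
  have r: "inV ({#1::real#} + {#3,6,6,6,6,7,7,7,7,9,9,9,8,8,0,0,0,1,1,1,5,5#}) 1" by (rule absorb[OF r0])
  have 1: "inV ({#5::real#} + (({#2::real#} + ({#3::real#} + {#2::real#})) + ({#1::real#} + {#3,6,6,6,6,7,7,7,7,9,9,9,8,8,0,0,0,1,1,1,5,5#}))) (real ((5::nat)^38))" by (rule powI[OF sing keep[OF h7 r], where k=38]) simp_all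
  have 2: "digit_mset (5^38) = ({#5::real#} + (({#2::real#} + ({#3::real#} + {#2::real#})) + ({#1::real#} + {#3,6,6,6,6,7,7,7,7,9,9,9,8,8,0,0,0,1,1,1,5,5#})))" by (simp add: digit_mset_def digits.simps)
  show ?thesis unfolding selfcondensable_def 2 using 1 by simp
qed

lemma sc39: "selfcondensable (5^39)"
proof -
  have h2: "inV {#1::real#} 1" by (rule sing)
  have h4: "inV {#5::real#} 5" by (rule sing)
  have h5: "inV {#8::real#} 8" by (rule sing)
  have h6: "inV ({#5::real#} + {#8::real#}) (40)" using mulI[OF h4 h5, where c="40"] by simp
  have h7: "inV (({#5::real#} + {#8::real#}) + {#1::real#}) (39)" using subI[OF h6 h2, where c="39"] by simp
  have r0: "inV {#1::real#} 1" by (rule sing)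
  have r: "inV ({#1::real#} + {#1,8,8,8,8,8,9,9,4,4,4,0,0,0,3,3,5,5,5,6,7,7,2#}) 1" by (rule absorb[OF r0])
  have 1: "inV ({#5::real#} + ((({#5::real#} + {#8::real#}) + {#1::real#}) + ({#1::real#} + {#1,8,8,8,8,8,9,9,4,4,4,0,0,0,3,3,5,5,5,6,7,7,2#}))) (real ((5::nat)^39))" by (rule powI[OF sing keep[OF h7 r], where k=39]) simp_all
  have 2: "digit_mset (5^39) = ({#5::real#} + ((({#5::real#} + {#8::real#}) + {#1::real#}) + ({#1::real#} + {#1,8,8,8,8,8,9,9,4,4,4,0,0,0,3,3,5,5,5,6,7,7,2#})))" by (simp add: digit_mset_def digits.simps)
  show ?thesis unfolding selfcondensable_def 2 using 1 by simp
qed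

lemma sc40: "selfcondensable (5^40)"
proof -
  have h2: "inV {#5::real#} 5" by (rule sing)
  have h3: "inV {#8::real#} 8" by (rule sing)
  have h4: "inV ({#5::real#} + {#8::real#}) (40)" using mulI[OF h2 h3, where c="40"] by simp
  have r0: "inV {#1::real#} 1" by (rule sing)
  have r: "inV ({#1::real#} + {#9,9,9,9,9,9,0,0,0,0,4,4,7,7,7,7,1,2,2,2,2,3,3,6#}) 1" by (rule absorb[OF r0])
  have 1: "inV ({#5::real#} + (({#5::real#} + {#8::real#}) + ({#1::real#} + {#9,9,9,9,9,9,0,0,0,0,4,4,7,7,7,7,1,2,2,2,2,3,3,6#}))) (real ((5::nat)^40))" by (rule powI[OF sing keep[OF h4 r], where k=40]) simp_all
  have 2: "digit_mset (5^40) = ({#5::real#} + (({#5::real#} + {#8::real#}) + ({#1::real#} + {#9,9,9,9,9,9,0,0,0,0,4,4,7,7,7,7,1,2,2,2,2,3,3,6#})))" by (simp add: digit_mset_def digits.simps)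
  show ?thesis unfolding selfcondensable_def 2 using 1 by simp
qed

lemma sc41: "selfcondensable (5^41)"
proof -
  have h2: "inV {#1::real#} 1" by (rule sing)
  have h4: "inV {#3::real#} 6" using fctI[OF sing[of "3::real"], where k=3 and c=6] by (simp add: fact_numeral)
  have h5: "inV {#7::real#} 7" by (rule sing)
  have h6: "inV ({#3::real#} + {#7::real#}) (42)" using mulI[OF h4 h5, where c="42"] by simp
  have h7: "inV (({#3::real#} + {#7::real#}) + {#1::real#}) (41)" using subI[OF h6 h2, where c="41"] by simp
  have r0: "inV {#1::real#} 1" by (rule sing)
  have r: "inV ({#1::real#} + {#4,4,4,4,4,5,5,5,5,5,7,7,3,0,8,8,8,6,6,1,1,9,9,2#}) 1" by (rule absorb[OF r0])
  have 1: "inV ({#5::real#} + ((({#3::real#} + {#7::real#}) + {#1::real#}) + ({#1::real#} + {#4,4,4,4,4,5,5,5,5,5,7,7,3,0,8,8,8,6,6,1,1,9,9,2#}))) (real ((5::nat)^41))" by (rule powI[OF sing keep[OF h7 r], where k=41]) simp_all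
  have 2: "digit_mset (5^41) = ({#5::real#} + ((({#3::real#} + {#7::real#}) + {#1::real#}) + ({#1::real#} + {#4,4,4,4,4,5,5,5,5,5,7,7,3,0,8,8,8,6,6,1,1,9,9,2#})))" by (simp add: digit_mset_def digits.simps)
  show ?thesis unfolding selfcondensable_def 2 using 1 by simp
qed

lemma sc42: "selfcondensable (5^42)"
proof -
  have h2: "inV {#3::real#} 6" using fctI[OF sing[of "3::real"], where k=3 and c=6] by (simp add: fact_numeral)
  have h3: "inV {#7::real#} 7" by (rule sing)
  have h4: "inV ({#3::real#} + {#7::real#}) (42)" using mulI[OF h2 h3, where c="42"] by simp
  have r0: "inV {#0::real#} 1" using fctI[OF sing[of "0::real"], where k=0 and c=1] by simp
  have r: "inV ({#0::real#} + {#2,2,2,2,2,7,7,7,7,7,3,3,3,6,6,6,5,5,5,5,4,4,4,9,9,8#}) 1" by (rule absorb[OF r0])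
  have 1: "inV ({#5::real#} + (({#3::real#} + {#7::real#}) + ({#0::real#} + {#2,2,2,2,2,7,7,7,7,7,3,3,3,6,6,6,5,5,5,5,4,4,4,9,9,8#}))) (real ((5::nat)^42))" by (rule powI[OF sing keep[OF h4 r], where k=42]) simp_all
  have 2: "digit_mset (5^42) = ({#5::real#} + (({#3::real#} + {#7::real#}) + ({#0::real#} + {#2,2,2,2,2,7,7,7,7,7,3,3,3,6,6,6,5,5,5,5,4,4,4,9,9,8#})))" by (simp add: digit_mset_def digits.simps)
  show ?thesis unfolding selfcondensable_def 2 using 1 by simp
qed

lemma sc43: "selfcondensable (5^43)"
proof -
  have h2: "inV {#1::real#} 1" by (rule sing)
  have h4: "inV {#3::real#} 6" using fctI[OF sing[of "3::real"], where k=3 and c=6] by (simp add: fact_numeral)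
  have h5: "inV {#7::real#} 7" by (rule sing)
  have h6: "inV ({#3::real#} + {#7::real#}) (42)" using mulI[OF h4 h5, where c="42"] by simp
  have h7: "inV ({#1::real#} + ({#3::real#} + {#7::real#})) (43)" using addI[OF h2 h6, where c="43"] by simp
  have r0: "inV {#1::real#} 1" by (rule sing)
  have r: "inV ({#1::real#} + {#1,1,1,3,3,3,6,6,6,6,8,8,8,8,8,7,7,7,2,2,2,2,0,9,9,9#}) 1" by (rule absorb[OF r0])
  have 1: "inV ({#5::real#} + (({#1::real#} + ({#3::real#} + {#7::real#})) + ({#1::real#} + {#1,1,1,3,3,3,6,6,6,6,8,8,8,8,8,7,7,7,2,2,2,2,0,9,9,9#}))) (real ((5::nat)^43))" by (rule powI[OF sing keep[OF h7 r], where k=43]) simp_all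
  have 2: "digit_mset (5^43) = ({#5::real#} + (({#1::real#} + ({#3::real#} + {#7::real#})) + ({#1::real#} + {#1,1,1,3,3,3,6,6,6,6,8,8,8,8,8,7,7,7,2,2,2,2,0,9,9,9#})))" by (simp add: digit_mset_def digits.simps)
  show ?thesis unfolding selfcondensable_def 2 using 1 by simp
qed

lemma sc44: "selfcondensable (5^44)"
proof -
  have h2: "inV {#1::real#} 1" by (rule sing)
  have h4: "inV {#5::real#} 5" by (rule sing)
  have h5: "inV {#9::real#} 9" by (rule sing)
  have h6: "inV ({#5::real#} + {#9::real#}) (45)" using mulI[OF h4 h5, where c="45"] by simp
  have h7: "inV (({#5::real#} + {#9::real#}) + {#1::real#}) (44)" using subI[OF h6 h2, where c="44"] by simp
  have r0: "inV {#1::real#} 1" by (rule sing)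
  have r: "inV ({#1::real#} + {#6,6,6,6,6,8,8,8,8,8,8,8,4,4,4,4,4,3,1,0,0,0,0,9,9,2#}) 1" by (rule absorb[OF r0])
  have 1: "inV ({#5::real#} + ((({#5::real#} + {#9::real#}) + {#1::real#}) + ({#1::real#} + {#6,6,6,6,6,8,8,8,8,8,8,8,4,4,4,4,4,3,1,0,0,0,0,9,9,2#}))) (real ((5::nat)^44))" by (rule powI[OF sing keep[OF h7 r], where k=44]) simp_all
  have 2: "digit_mset (5^44) = ({#5::real#} + ((({#5::real#} + {#9::real#}) + {#1::real#}) + ({#1::real#} + {#6,6,6,6,6,8,8,8,8,8,8,8,4,4,4,4,4,3,1,0,0,0,0,9,9,2#})))" by (simp add: digit_mset_def digits.simps)
  show ?thesis unfolding selfcondensable_def 2 using 1 by simp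
qed

lemma sc45: "selfcondensable (5^45)"
proof -
  have h3: "inV {#1::real#} 1" by (rule sing)
  have h4: "inV {#3::real#} 6" using fctI[OF sing[of "3::real"], where k=3 and c=6] by (simp add: fact_numeral)
  have h5: "inV ({#3::real#} + {#1::real#}) (5)" using subI[OF h4 h3, where c="5"] by simp
  have h6: "inV {#9::real#} 9" by (rule sing)
  have h7: "inV (({#3::real#} + {#1::real#}) + {#9::real#}) (45)" using mulI[OF h5 h6, where c="45"] by simp
  have r0: "inV {#1::real#} 1" by (rule sing)
  have r: "inV ({#1::real#} + {#2,2,2,8,8,4,4,4,4,4,4,4,4,7,7,7,7,0,0,0,0,0,0,0,9,3,3#}) 1" by (rule absorb[OF r0])
  have 1: "inV ({#5::real#} + ((({#3::real#} + {#1::real#}) + {#9::real#}) + ({#1::real#} + {#2,2,2,8,8,4,4,4,4,4,4,4,4,7,7,7,7,0,0,0,0,0,0,0,9,3,3#}))) (real ((5::nat)^45))" by (rule powI[OF sing keep[OF h7 r], where k=45]) simp_all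
  have 2: "digit_mset (5^45) = ({#5::real#} + ((({#3::real#} + {#1::real#}) + {#9::real#}) + ({#1::real#} + {#2,2,2,8,8,4,4,4,4,4,4,4,4,7,7,7,7,0,0,0,0,0,0,0,9,3,3#})))" by (simp add: digit_mset_def digits.simps)
  show ?thesis unfolding selfcondensable_def 2 using 1 by simp
qed

lemma sc46: "selfcondensable (5^46)"
proof -
  have h3: "inV {#1::real#} 1" by (rule sing)
  have h4: "inV {#4::real#} 24" using fctI[OF sing[of "4::real"], where k=4 and c=24] by (simp add: fact_numeral)
  have h5: "inV ({#4::real#} + {#1::real#}) (23)" using subI[OF h4 h3, where c="23"] by simp
  have h6: "inV {#2::real#} 2" by (rule sing)
  have h7: "inV (({#4::real#} + {#1::real#}) + {#2::real#}) (46)" using mulI[OF h5 h6, where c="46"] by simp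
  have r0: "inV {#1::real#} 1" by (rule sing)
  have r: "inV ({#1::real#} + {#1,1,1,4,4,4,2,2,2,2,2,0,0,0,0,8,8,5,5,5,5,5,7,7,7,3,3,6#}) 1" by (rule absorb[OF r0])
  have 1: "inV ({#5::real#} + ((({#4::real#} + {#1::real#}) + {#2::real#}) + ({#1::real#} + {#1,1,1,4,4,4,2,2,2,2,2,0,0,0,0,8,8,5,5,5,5,5,7,7,7,3,3,6#}))) (real ((5::nat)^46))" by (rule powI[OF sing keep[OF h7 r], where k=46]) simp_all
  have 2: "digit_mset (5^46) = ({#5::real#} + ((({#4::real#} + {#1::real#}) + {#2::real#}) + ({#1::real#} + {#1,1,1,4,4,4,2,2,2,2,2,0,0,0,0,8,8,5,5,5,5,5,7,7,7,3,3,6#})))" by (simp add: digit_mset_def digits.simps)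
  show ?thesis unfolding selfcondensable_def 2 using 1 by simp
qed

lemma sc47: "selfcondensable (5^47)"
proof -
  have h2: "inV {#1::real#} 1" by (rule sing)
  have h4: "inV {#2::real#} 2" by (rule sing)
  have h5: "inV {#4::real#} 24" using fctI[OF sing[of "4::real"], where k=4 and c=24] by (simp add: fact_numeral)
  have h6: "inV ({#2::real#} + {#4::real#}) (48)" using mulI[OF h4 h5, where c="48"] by simp
  have h7: "inV (({#2::real#} + {#4::real#}) + {#1::real#}) (47)" using subI[OF h6 h2, where c="47"] by simp
  have r0: "inV {#1::real#} 1" by (rule sing)
  have r: "inV ({#1::real#} + {#7,7,7,7,7,7,1,1,1,1,0,0,0,0,5,5,5,5,4,2,2,2,3,6,6,8,8,8#}) 1" by (rule absorb[OF r0])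
  have 1: "inV ({#5::real#} + ((({#2::real#} + {#4::real#}) + {#1::real#}) + ({#1::real#} + {#7,7,7,7,7,7,1,1,1,1,0,0,0,0,5,5,5,5,4,2,2,2,3,6,6,8,8,8#}))) (real ((5::nat)^47))" by (rule powI[OF sing keep[OF h7 r], where k=47]) simp_all
  have 2: "digit_mset (5^47) = ({#5::real#} + ((({#2::real#} + {#4::real#}) + {#1::real#}) + ({#1::real#} + {#7,7,7,7,7,7,1,1,1,1,0,0,0,0,5,5,5,5,4,2,2,2,3,6,6,8,8,8#})))" by (simp add: digit_mset_def digits.simps)
  show ?thesis unfolding selfcondensable_def 2 using 1 by simp
qed

lemma sc48: "selfcondensable (5^48)"
proof -
  have h2: "inV {#3::real#} 6" using fctI[OF sing[of "3::real"], where k=3 and c=6] by (simp add: fact_numeral)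
  have h3: "inV {#8::real#} 8" by (rule sing)
  have h4: "inV ({#3::real#} + {#8::real#}) (48)" using mulI[OF h2 h3, where c="48"] by simp
  have r0: "inV {#1::real#} 1" by (rule sing)
  have r: "inV ({#1::real#} + {#3,3,3,3,5,5,5,5,5,2,2,2,2,7,7,7,1,6,6,6,8,8,0,0,0,0,0,9,9,9#}) 1" by (rule absorb[OF r0])
  have 1: "inV ({#5::real#} + (({#3::real#} + {#8::real#}) + ({#1::real#} + {#3,3,3,3,5,5,5,5,5,2,2,2,2,7,7,7,1,6,6,6,8,8,0,0,0,0,0,9,9,9#}))) (real ((5::nat)^48))" by (rule powI[OF sing keep[OF h4 r], where k=48]) simp_all
  have 2: "digit_mset (5^48) = ({#5::real#} + (({#3::real#} + {#8::real#}) + ({#1::real#} + {#3,3,3,3,5,5,5,5,5,2,2,2,2,7,7,7,1,6,6,6,8,8,0,0,0,0,0,9,9,9#})))" by (simp add: digit_mset_def digits.simps)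
  show ?thesis unfolding selfcondensable_def 2 using 1 by simp
qed

lemma sc49: "selfcondensable (5^49)"
proof -
  have h2: "inV {#2::real#} 2" by (rule sing)
  have h3: "inV {#7::real#} 7" by (rule sing)
  have h4: "inV ({#7::real#} + {#2::real#}) (49)" using powI[OF h3 h2, where k=2 and c="49"] by simp
  have r0: "inV {#1::real#} 1" by (rule sing)
  have r: "inV ({#1::real#} + {#1,1,7,7,7,6,6,6,6,6,6,3,3,3,5,5,5,8,8,8,9,9,4,4,4,4,0,0,0,0,2#}) 1" by (rule absorb[OF r0])
  have 1: "inV ({#5::real#} + (({#7::real#} + {#2::real#}) + ({#1::real#} + {#1,1,7,7,7,6,6,6,6,6,6,3,3,3,5,5,5,8,8,8,9,9,4,4,4,4,0,0,0,0,2#}))) (real ((5::nat)^49))" by (rule powI[OF sing keep[OF h4 r], where k=49]) simp_all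
  have 2: "digit_mset (5^49) = ({#5::real#} + (({#7::real#} + {#2::real#}) + ({#1::real#} + {#1,1,7,7,7,6,6,6,6,6,6,3,3,3,5,5,5,8,8,8,9,9,4,4,4,4,0,0,0,0,2#})))" by (simp add: digit_mset_def digits.simps)
  show ?thesis unfolding selfcondensable_def 2 using 1 by simp
qed

lemma sc50: "selfcondensable (5^50)"
proof -
  have h3: "inV {#1::real#} 1" by (rule sing)
  have h4: "inV {#4::real#} 24" using fctI[OF sing[of "4::real"], where k=4 and c=24] by (simp add: fact_numeral)
  have h5: "inV ({#1::real#} + {#4::real#}) (25)" using addI[OF h3 h4, where c="25"] by simp
  have h6: "inV {#2::real#} 2" by (rule sing)
  have h7: "inV (({#1::real#} + {#4::real#}) + {#2::real#}) (50)" using mulI[OF h5 h6, where c="50"] by simp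
  have r0: "inV {#1::real#} 1" by (rule sing)
  have r: "inV ({#1::real#} + {#8,8,8,8,8,1,7,7,7,4,4,9,9,0,0,0,2,2,2,2,5,5,5,3,3,3,3,3,6,6#}) 1" by (rule absorb[OF r0])
  have 1: "inV ({#5::real#} + ((({#1::real#} + {#4::real#}) + {#2::real#}) + ({#1::real#} + {#8,8,8,8,8,1,7,7,7,4,4,9,9,0,0,0,2,2,2,2,5,5,5,3,3,3,3,3,6,6#}))) (real ((5::nat)^50))" by (rule powI[OF sing keep[OF h7 r], where k=50]) simp_all
  have 2: "digit_mset (5^50) = ({#5::real#} + ((({#1::real#} + {#4::real#}) + {#2::real#}) + ({#1::real#} + {#8,8,8,8,8,1,7,7,7,4,4,9,9,0,0,0,2,2,2,2,5,5,5,3,3,3,3,3,6,6#})))" by (simp add: digit_mset_def digits.simps)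
  show ?thesis unfolding selfcondensable_def 2 using 1 by simp
qed

lemma sc51: "selfcondensable (5^51)"
proof -
  have h2: "inV {#2::real#} 2" by (rule sing)
  have h4: "inV {#2::real#} 2" by (rule sing)
  have h5: "inV {#7::real#} 7" by (rule sing)
  have h6: "inV ({#7::real#} + {#2::real#}) (49)" using powI[OF h5 h4, where k=2 and c="49"] by simp
  have h7: "inV ({#2::real#} + ({#7::real#} + {#2::real#})) (51)" using addI[OF h2 h6, where c="51"] by simp
  have r0: "inV {#1::real#} 1" by (rule sing)
  have r: "inV ({#1::real#} + {#4,4,4,4,0,0,0,0,8,8,8,9,9,9,2,2,2,2,5,5,6,6,6,6,6,6,6,1,1,3,3#}) 1" by (rule absorb[OF r0])
  have 1: "inV ({#5::real#} + (({#2::real#} + ({#7::real#} + {#2::real#})) + ({#1::real#} + {#4,4,4,4,0,0,0,0,8,8,8,9,9,9,2,2,2,2,5,5,6,6,6,6,6,6,6,1,1,3,3#}))) (real ((5::nat)^51))" by (rule powI[OF sing keep[OF h7 r], where k=51]) simp_all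
  have 2: "digit_mset (5^51) = ({#5::real#} + (({#2::real#} + ({#7::real#} + {#2::real#})) + ({#1::real#} + {#4,4,4,4,0,0,0,0,8,8,8,9,9,9,2,2,2,2,5,5,6,6,6,6,6,6,6,1,1,3,3#})))" by (simp add: digit_mset_def digits.simps)
  show ?thesis unfolding selfcondensable_def 2 using 1 by simp
qed

lemma sc52: "selfcondensable (5^52)"
proof -
  have h2: "inV {#2::real#} 2" by (rule sing)
  have h4: "inV {#2::real#} 2" by (rule sing)
  have h5: "inV {#4::real#} 24" using fctI[OF sing[of "4::real"], where k=4 and c=24] by (simp add: fact_numeral)
  have h6: "inV ({#2::real#} + {#4::real#}) (26)" using addI[OF h4 h5, where c="26"] by simp
  have h7: "inV ({#2::real#} + ({#2::real#} + {#4::real#})) (52)" using mulI[OF h2 h6, where c="52"] by simp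
  have r0: "inV {#1::real#} 1" by (rule sing)
  have r: "inV ({#1::real#} + {#2,2,2,2,0,0,0,0,0,0,4,4,4,4,6,6,6,6,6,9,5,3,3,3,3,3,1,1,8,8,8,7#}) 1" by (rule absorb[OF r0])
  have 1: "inV ({#5::real#} + (({#2::real#} + ({#2::real#} + {#4::real#})) + ({#1::real#} + {#2,2,2,2,0,0,0,0,0,0,4,4,4,4,6,6,6,6,6,9,5,3,3,3,3,3,1,1,8,8,8,7#}))) (real ((5::nat)^52))" by (rule powI[OF sing keep[OF h7 r], where k=52]) simp_all
  have 2: "digit_mset (5^52) = ({#5::real#} + (({#2::real#} + ({#2::real#} + {#4::real#})) + ({#1::real#} + {#2,2,2,2,0,0,0,0,0,0,4,4,4,4,6,6,6,6,6,9,5,3,3,3,3,3,1,1,8,8,8,7#})))" by (simp add: digit_mset_def digits.simps)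
  show ?thesis unfolding selfcondensable_def 2 using 1 by simp
qed

lemma sc53: "selfcondensable (5^53)"
proof -
  have h2: "inV {#1::real#} 1" by (rule sing)
  have h4: "inV {#3::real#} 6" using fctI[OF sing[of "3::real"], where k=3 and c=6] by (simp add: fact_numeral)
  have h5: "inV {#9::real#} 9" by (rule sing)
  have h6: "inV ({#3::real#} + {#9::real#}) (54)" using mulI[OF h4 h5, where c="54"] by simp
  have h7: "inV (({#3::real#} + {#9::real#}) + {#1::real#}) (53)" using subI[OF h6 h2, where c="53"] by simp
  have r0: "inV {#1::real#} 1" by (rule sing)
  have r: "inV ({#1::real#} + {#1,1,1,1,0,0,0,0,0,0,2,2,2,2,2,2,2,3,3,3,4,4,4,6,6,6,6,6,5,5,5,8,8#}) 1" by (rule absorb[OF r0])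
  have 1: "inV ({#5::real#} + ((({#3::real#} + {#9::real#}) + {#1::real#}) + ({#1::real#} + {#1,1,1,1,0,0,0,0,0,0,2,2,2,2,2,2,2,3,3,3,4,4,4,6,6,6,6,6,5,5,5,8,8#}))) (real ((5::nat)^53))" by (rule powI[OF sing keep[OF h7 r], where k=53]) simp_all
  have 2: "digit_mset (5^53) = ({#5::real#} + ((({#3::real#} + {#9::real#}) + {#1::real#}) + ({#1::real#} + {#1,1,1,1,0,0,0,0,0,0,2,2,2,2,2,2,2,3,3,3,4,4,4,6,6,6,6,6,5,5,5,8,8#})))" by (simp add: digit_mset_def digits.simps)
  show ?thesis unfolding selfcondensable_def 2 using 1 by simp
qed

lemma sc54: "selfcondensable (5^54)"
proof -
  have h3: "inV {#1::real#} 1" by (rule sing)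
  have h4: "inV {#8::real#} 8" by (rule sing)
  have h5: "inV ({#1::real#} + {#8::real#}) (9)" using addI[OF h3 h4, where c="9"] by simp
  have h6: "inV {#3::real#} 6" using fctI[OF sing[of "3::real"], where k=3 and c=6] by (simp add: fact_numeral)
  have h7: "inV (({#1::real#} + {#8::real#}) + {#3::real#}) (54)" using mulI[OF h5 h6, where c="54"] by simp
  have r0: "inV {#1::real#} 1" by (rule sing)
  have r: "inV ({#1::real#} + {#5,5,5,5,5,5,5,5,1,1,1,1,1,1,1,1,2,2,2,2,2,3,7,7,8,8,0,0,0,4,4,4,6#}) 1" by (rule absorb[OF r0])
  have 1: "inV ({#5::real#} + ((({#1::real#} + {#8::real#}) + {#3::real#}) + ({#1::real#} + {#5,5,5,5,5,5,5,5,1,1,1,1,1,1,1,1,2,2,2,2,2,3,7,7,8,8,0,0,0,4,4,4,6#}))) (real ((5::nat)^54))" by (rule powI[OF sing keep[OF h7 r], where k=54]) simp_all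
  have 2: "digit_mset (5^54) = ({#5::real#} + ((({#1::real#} + {#8::real#}) + {#3::real#}) + ({#1::real#} + {#5,5,5,5,5,5,5,5,1,1,1,1,1,1,1,1,2,2,2,2,2,3,7,7,8,8,0,0,0,4,4,4,6#})))" by (simp add: digit_mset_def digits.simps)
  show ?thesis unfolding selfcondensable_def 2 using 1 by simp
qed

lemma sc55: "selfcondensable (5^55)"
proof -
  have h2: "inV {#1::real#} 1" by (rule sing)
  have h4: "inV {#3::real#} 6" using fctI[OF sing[of "3::real"], where k=3 and c=6] by (simp add: fact_numeral)
  have h5: "inV {#9::real#} 9" by (rule sing)
  have h6: "inV ({#3::real#} + {#9::real#}) (54)" using mulI[OF h4 h5, where c="54"] by simp
  have h7: "inV ({#1::real#} + ({#3::real#} + {#9::real#})) (55)" using addI[OF h2 h6, where c="55"] by simp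
  have r0: "inV {#1::real#} 1" by (rule sing)
  have r: "inV ({#1::real#} + {#2,2,2,2,2,7,7,7,7,7,7,7,5,5,5,5,5,5,5,5,6,6,1,1,1,8,8,9,9,0,0,0,0,0#}) 1" by (rule absorb[OF r0])
  have 1: "inV ({#5::real#} + (({#1::real#} + ({#3::real#} + {#9::real#})) + ({#1::real#} + {#2,2,2,2,2,7,7,7,7,7,7,7,5,5,5,5,5,5,5,5,6,6,1,1,1,8,8,9,9,0,0,0,0,0#}))) (real ((5::nat)^55))" by (rule powI[OF sing keep[OF h7 r], where k=55]) simp_all
  have 2: "digit_mset (5^55) = ({#5::real#} + (({#1::real#} + ({#3::real#} + {#9::real#})) + ({#1::real#} + {#2,2,2,2,2,7,7,7,7,7,7,7,5,5,5,5,5,5,5,5,6,6,1,1,1,8,8,9,9,0,0,0,0,0#})))" by (simp add: digit_mset_def digits.simps)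
  show ?thesis unfolding selfcondensable_def 2 using 1 by simp
qed


lemma Qsmall: "56 \<le> n \<Longrightarrow> n < 112 \<Longrightarrow> 10 ^ (2 * cost n + 10) \<le> (5::nat) ^ n"
proof -
  assume "56 \<le> n" "n < 112"
  then have "n = 56 \<or> n = 57 \<or> n = 58 \<or> n = 59 \<or> n = 60 \<or> n = 61 \<or> n = 62 \<or> n = 63 \<or> n = 64 \<or> n = 65 \<or> n = 66 \<or> n = 67 \<or> n = 68 \<or> n = 69 \<or> n = 70 \<or> n = 71 \<or> n = 72 \<or> n = 73 \<or> n = 74 \<or> n = 75 \<or> n = 76 \<or> n = 77 \<or> n = 78 \<or> n = 79 \<or> n = 80 \<or> n = 81 \<or> n = 82 \<or> n = 83 \<or> n = 84 \<or> n = 85 \<or> n = 86 \<or> n = 87 \<or> n = 88 \<or> n = 89 \<or> n = 90 \<or> n = 91 \<or> n = 92 \<or> n = 93 \<or> n = 94 \<or> n = 95 \<or> n = 96 \<or> n = 97 \<or> n = 98 \<or> n = 99 \<or> n = 100 \<or> n = 101 \<or> n = 102 \<or> n = 103 \<or> n = 104 \<or> n = 105 \<or> n = 106 \<or> n = 107 \<or> n = 108 \<or> n = 109 \<or> n = 110 \<or> n = 111" by presburger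
  then show ?thesis by (elim disjE) (simp_all add: cost.simps)
qed

lemma Qbig: "56 \<le> n \<Longrightarrow> 10 ^ (2 * cost n + 10) \<le> (5::nat) ^ n"
proof (induction n rule: less_induct)
  case (less n)
  show ?case
  proof (cases "n < 112")
    case True then show ?thesis using Qsmall less.prems by blast
  next
    case False
    define k where "k = n div 2"
    have k: "56 \<le> k" "k < n" using False by (auto simp: k_def)
    have IH: "10 ^ (2 * cost k + 10) \<le> (5::nat) ^ k" using less.IH k by blast
    have c: "cost n \<le> cost k + 3" using False by (simp add: cost.simps[of n] k_def)
    have "(10::nat) ^ (2 * cost n + 10) \<le> 10 ^ ((2 * cost k + 10) + (2 * cost k + 10))"
      by (rule power_increasing) (use c in auto)
    also have "\<dots> = 10 ^ (2 * cost k + 10) * 10 ^ (2 * cost k + 10)" by (rule power_add)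
    also have "\<dots> \<le> 5 ^ k * 5 ^ k" by (rule mult_mono) (use IH in auto)
    also have "\<dots> = 5 ^ (k + k)" by (rule power_add[symmetric])
    also have "\<dots> \<le> 5 ^ n" by (rule power_increasing) (auto simp: k_def)
    finally show ?thesis .
  qed
qed

theorem lemma7p3:
  fixes n :: nat
  assumes "n \<ge> 24"
  shows "selfcondensable (5 ^ n)"
proof (cases "56 \<le> n")
  case True
  then show ?thesis using generic[of n] Qbig[of n] by simp
next
  case False
  then have "n = 24 \<or> n = 25 \<or> n = 26 \<or> n = 27 \<or> n = 28 \<or> n = 29 \<or> n = 30 \<or> n = 31 \<or> n = 32 \<or> n = 33 \<or> n = 34 \<or> n = 35 \<or> n = 36 \<or> n = 37 \<or> n = 38 \<or> n = 39 \<or> n = 40 \<or> n = 41 \<or> n = 42 \<or> n = 43 \<or> n = 44 \<or> n = 45 \<or> n = 46 \<or> n = 47 \<or> n = 48 \<or> n = 49 \<or> n = 50 \<or> n = 51 \<or> n = 52 \<or> n = 53 \<or> n = 54 \<or> n = 55" using assms by presburger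
  then show ?thesis using sc24 sc25 sc26 sc27 sc28 sc29 sc30 sc31 sc32 sc33 sc34 sc35 sc36 sc37 sc38 sc39 sc40 sc41 sc42 sc43 sc44 sc45 sc46 sc47 sc48 sc49 sc50 sc51 sc52 sc53 sc54 sc55 by (elim disjE) simp_all
qed
end
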